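(* The geometric standard strongly integral super-packing is invariant under the translations $(x,y)\mapsto(x+2,y)$ and $(x,y)\mapsto(x,y+2)$ and under the reflections $(x,y)\mapsto(-x,y)$ and $(x,y)\mapsto(x,-y)$. The crystallographic group generated by these four motions is the complete group of Euclidean motions of the plane leaving the geometric standard strongly integral super-packing invariant.
   Context: Circles are taken in $\hat{\mathbb C}=\mathbb R^2\cup\{\infty\}$; lines count as circles. A Descartes configuration is a set of four mutually tangent circles with disjoint interiors; an ordered, oriented one carries an ordering and total orientation, with signed curvatures (reciprocal radius, negative if the interior is unbounded, $0$ for lines). Its augmented curvature-center coordinate matrix $W_{\mathcal D}$ has $i$-th row $(\bar b_i,b_i,b_ix_i,b_iy_i)$ with $(x_i,y_i)$ the center and $\bar b_i=b_i(x_i^2+y_i^2)-1/b_i$ (for a line: $(2p\cdot n,0,n_x,n_y)$, $n$ the unit normal pointing into the interior half-plane, $p$ a point of the line); it determines $\mathcal D$. Let $S_i$ be the $4\times4$ integer matrix equal to the identity except that row $i$ has $-1$ in position $i$ and $2$ elsewhere, $S_i^\perp=S_i^T$, and $\mathcal A^S=\langle S_i,S_i^\perp\rangle$ the super-Apollonian group, acting by $W_{U[\mathcal D]}=UW_{\mathcal D}$. The geometric super-packing generated by $\mathcal D$ is the set of all circles of configurations in $\mathcal A^S[\mathcal D]$. The standard strongly integral super-packing is the one generated by the configuration $\mathcal D_1$ with $W_{\mathcal D_1}=\begin{pmatrix}2&0&0&1\\2&0&0&-1\\0&1&1&0\\0&1&-1&0\end{pmatrix}$, i.e. the lines $y=1$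 and $y=-1$ and the circles of radius $1$ centered at $(1,0)$ and $(-1,0)$. *)

theory Defs
  imports "HOL-Analysis.Analysis" "HOL-Library.Numeral_Type"
begin

text \<open>4x4 real matrices indexed by the 4-element type 4. A row (bbar, b, b*x, b*y)
  of an augmented curvature-center coordinate matrix is accessed as
  v$1, v$2, v$3, v$4 (the four distinct elements of type 4).\<close>

definition S_gen :: "4 \<Rightarrow> real^4^4" where
  "S_gen i = (\<chi> r c. if r = i then (if c = i then -1 else 2) else (if r = c then 1 else 0))"

definition S_gen_perp :: "4 \<Rightarrow> real^4^4" where
  "S_gen_perp i = transpose (S_gen i)"

text \<open>The super-Apollonian group: the group generated by the S_i and S_i^perp
  (all generators are involutions, so closure under left multiplication by
  generators and their inverses from the identity gives the generated group).\<close>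
inductive_set super_apollonian_group :: "(real^4^4) set" where
  id: "mat 1 \<in> super_apollonian_group"
| S: "U \<in> super_apollonian_group \<Longrightarrow> S_gen i ** U \<in> super_apollonian_group"
| Sp: "U \<in> super_apollonian_group \<Longrightarrow> S_gen_perp i ** U \<in> super_apollonian_group"
| Sinv: "U \<in> super_apollonian_group \<Longrightarrow> matrix_inv (S_gen i) ** U \<in> super_apollonian_group"
| Spinv: "U \<in> super_apollonian_group \<Longrightarrow> matrix_inv (S_gen_perp i) ** U \<in> super_apollonian_group"

definition mkrow :: "real \<Rightarrow> real \<Rightarrow> real \<Rightarrow> real \<Rightarrow> real^4" where
  "mkrow a b c d = (\<chi> j. if j = 1 then a else if j = 2 then b else if j = 3 then c else d)"

text \<open>W_{D_1}: lines y=1, y=-1, unit circles centred at (1,0), (-1,0).\<close>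
definition W_D1 :: "real^4^4" where
  "W_D1 = (\<chi> i. if i = 1 then mkrow 2 0 0 1
               else if i = 2 then mkrow 2 0 0 (-1)
               else if i = 3 then mkrow 0 1 1 0
               else mkrow 0 1 (-1) 0)"

text \<open>Geometric (unoriented) circle, as a point set in R^2 (the point at infinity
  of a line is omitted), determined by a row (bbar, b, b x, b y).\<close>
definition circle_of_row :: "real^4 \<Rightarrow> (real^2) set" where
  "circle_of_row v =
     (if v$2 \<noteq> 0 then sphere (\<chi> k. if k = 1 then v$3 / v$2 else v$4 / v$2) (1 / \<bar>v$2\<bar>)
      else {p. p$1 * v$3 + p$2 * v$4 = v$1 / 2})"

definition geometric_super_packing :: "real^4^4 \<Rightarrow> (real^2) set set" where
  "geometric_super_packing W =
     {circle_of_row ((U ** W) $ i) | U i. U \<in> super_apollonian_group}"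

definition standard_super_packing :: "(real^2) set set" where
  "standard_super_packing = geometric_super_packing W_D1"

definition pt :: "real \<Rightarrow> real \<Rightarrow> real^2" where
  "pt x y = (\<chi> k. if k = 1 then x else y)"

definition transl_x :: "real^2 \<Rightarrow> real^2" where "transl_x p = pt (p$1 + 2) (p$2)"
definition transl_y :: "real^2 \<Rightarrow> real^2" where "transl_y p = pt (p$1) (p$2 + 2)"
definition refl_x :: "real^2 \<Rightarrow> real^2" where "refl_x p = pt (- p$1) (p$2)"
definition refl_y :: "real^2 \<Rightarrow> real^2" where "refl_y p = pt (p$1) (- p$2)"

definition motion_gens :: "(real^2 \<Rightarrow> real^2) set" where
  "motion_gens = {transl_x, transl_y, refl_x, refl_y}"

inductive_set motion_group :: "(real^2 \<Rightarrow> real^2) set" where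
  id: "id \<in> motion_group"
| gen: "f \<in> motion_group \<Longrightarrow> g \<in> motion_gens \<Longrightarrow> g \<circ> f \<in> motion_group"
| geninv: "f \<in> motion_group \<Longrightarrow> g \<in> motion_gens \<Longrightarrow> inv g \<circ> f \<in> motion_group"

text \<open>Euclidean motion of the plane: a distance-preserving map (automatically bijective).\<close>
definition euclidean_motion :: "(real^2 \<Rightarrow> real^2) \<Rightarrow> bool" where
  "euclidean_motion f \<longleftrightarrow> (\<forall>p q. dist (f p) (f q) = dist p q)"

definition leaves_invariant :: "(real^2 \<Rightarrow> real^2) \<Rightarrow> (real^2) set set \<Rightarrow> bool" where
  "leaves_invariant f P \<longleftrightarrow> (\<lambda>C. f ` C) ` P = P"

end

theory Submission
  imports Defs
begin

abbreviation SA where "SA \<equiv> super_apollonian_group"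

lemma SS: "S_gen i ** S_gen i = mat 1"
  using exhaust_4[of i]
  by (auto simp: S_gen_def matrix_matrix_mult_def mat_def vec_eq_iff sum_4 forall_4)

lemma SpSp: "S_gen_perp i ** S_gen_perp i = mat 1"
  unfolding S_gen_perp_def by (metis SS matrix_transpose_mul transpose_mat)

lemma inv_invol:
  fixes A :: "real^4^4"
  assumes "A ** A = mat 1" shows "matrix_inv A = A"
  unfolding matrix_inv_def
proof (rule some_equality)
  show "A ** A = mat 1 \<and> A ** A = mat 1" using assms by simp
next
  fix B :: "real^4^4" assume "A ** B = mat 1 \<and> B ** A = mat 1"
  then have "B = (B ** A) ** A" using assms by (metis matrix_mul_assoc matrix_mul_rid)
  then show "B = A" using \<open>A ** B = mat 1 \<and> B ** A = mat 1\<close> by simp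
qed

lemma invS[simp]: "matrix_inv (S_gen i) = S_gen i" by (rule inv_invol[OF SS])
lemma invSp[simp]: "matrix_inv (S_gen_perp i) = S_gen_perp i" by (rule inv_invol[OF SpSp])

lemma SA_induct[consumes 1, case_names id S Sp]:
  assumes "U \<in> SA" "P (mat 1)"
    "\<And>U i. U \<in> SA \<Longrightarrow> P U \<Longrightarrow> P (S_gen i ** U)"
    "\<And>U i. U \<in> SA \<Longrightarrow> P U \<Longrightarrow> P (S_gen_perp i ** U)"
  shows "P U"
  using assms(1) by (induct rule: super_apollonian_group.induct) (auto intro: assms)

lemma SA_mult: "U \<in> SA \<Longrightarrow> V \<in> SA \<Longrightarrow> U ** V \<in> SA"
proof (induct U rule: SA_induct)
  case id then show ?case by simp
next
  case (S U i) then show ?case by (metis matrix_mul_assoc super_apollonian_group.S)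
next
  case (Sp U i) then show ?case by (metis matrix_mul_assoc super_apollonian_group.Sp)
qed

lemma SA_S: "S_gen i \<in> SA"
  by (metis matrix_mul_rid super_apollonian_group.S super_apollonian_group.id)
lemma SA_Sp: "S_gen_perp i \<in> SA"
  by (metis matrix_mul_rid super_apollonian_group.Sp super_apollonian_group.id)

definition cj :: "(4 \<Rightarrow> 4) \<Rightarrow> real^4^4 \<Rightarrow> real^4^4" where
  "cj p U = (\<chi> r c. U$(p r)$(p c))"

definition Pm :: "(4 \<Rightarrow> 4) \<Rightarrow> real^4^4" where
  "Pm p = (\<chi> r c. if c = p r then 1 else 0)"

definition sw :: "4 \<Rightarrow> 4 \<Rightarrow> 4 \<Rightarrow> 4" where
  "sw a b x = (if x = a then b else if x = b then a else x)"

lemma sw_invol[simp]: "sw a b (sw a b x) = x"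
  by (simp add: sw_def)

lemma cj_mult:
  assumes inv: "\<And>x. p (p x) = x"
  shows "cj p (A ** B) = cj p A ** cj p B"
proof -
  have "\<And>r c. (\<Sum>k\<in>UNIV. A $ p r $ k * B $ k $ p c) = (\<Sum>k\<in>UNIV. A $ p r $ p k * B $ p k $ p c)"
    by (rule sum.reindex_bij_witness[where i=p and j=p]) (auto simp: inv)
  then show ?thesis by (simp add: cj_def matrix_matrix_mult_def vec_eq_iff)
qed

lemma cj_mat1:
  assumes inv: "\<And>x. p (p x) = x"
  shows "cj p (mat 1) = mat 1"
  unfolding cj_def mat_def vec_eq_iff by (auto, metis inv)

lemma cj_S:
  assumes inv: "\<And>x. p (p x) = x"
  shows "cj p (S_gen i) = S_gen (p i)"
  unfolding cj_def S_gen_def vec_eq_iff by (auto, (metis inv)+)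

lemma cj_Sp:
  assumes inv: "\<And>x. p (p x) = x"
  shows "cj p (S_gen_perp i) = S_gen_perp (p i)"
  unfolding cj_def S_gen_perp_def S_gen_def transpose_def vec_eq_iff by (auto, (metis inv)+)

lemma cj_cj:
  assumes inv: "\<And>x. p (p x) = x"
  shows "cj p (cj p U) = U"
  unfolding cj_def by (simp add: inv vec_eq_iff)

lemma cj_SA:
  assumes inv: "\<And>x. p (p x) = x"
  shows "U \<in> SA \<Longrightarrow> cj p U \<in> SA"
proof (induct U rule: SA_induct)
  case id then show ?case by (simp add: cj_mat1 inv super_apollonian_group.id)
next
  case (S U i) then show ?case by (simp add: cj_mult cj_S inv super_apollonian_group.S)
next
  case (Sp U i) then show ?case by (simp add: cj_mult cj_Sp inv super_apollonian_group.Sp)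
qed

lemma Pm_comm:
  assumes inv: "\<And>x. p (p x) = x"
  shows "U ** Pm p = Pm p ** cj p U"
proof -
  have a: "(\<Sum>k\<in>UNIV. U $ r $ k * (if c = p k then 1 else 0)) = U $ r $ p c" for r c
  proof -
    have "(\<Sum>k\<in>UNIV. U $ r $ k * (if c = p k then 1 else 0)) = (\<Sum>k\<in>UNIV. if k = p c then U $ r $ k else 0)"
    proof (rule sum.cong)
      fix k
      have "c = p k \<longleftrightarrow> k = p c" using inv by metis
      then show "U $ r $ k * (if c = p k then 1 else 0) = (if k = p c then U $ r $ k else 0)" by simp
    qed simp
    then show ?thesis by simp
  qed
  have b: "(\<Sum>k\<in>UNIV. (if k = p r then 1 else 0) * f k) = (f (p r)::real)" for r f
  proof -
    have "(\<Sum>k\<in>UNIV. (if k = p r then 1 else 0) * f k) = (\<Sum>k\<in>UNIV. if k = p r then f k else 0)"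
      by (rule sum.cong) auto
    then show ?thesis by simp
  qed
  show ?thesis unfolding matrix_matrix_mult_def Pm_def vec_eq_iff
    using a b by (simp add: cj_def inv)
qed

lemma Pm_row: "(Pm p ** X) $ i = X $ (p i)"
proof -
  have "(\<Sum>k\<in>UNIV. (if k = p i then 1 else 0) * X $ k $ c) = (\<Sum>k\<in>UNIV. if k = p i then X $ k $ c else 0)" for c
    by (rule sum.cong) auto
  then show ?thesis by (simp add: Pm_def matrix_matrix_mult_def vec_eq_iff)
qed


definition intmat :: "real^4^4 \<Rightarrow> bool" where "intmat A \<longleftrightarrow> (\<forall>r c. A$r$c \<in> \<int>)"
definition Em :: "real^4^4 \<Rightarrow> real^4^4" where "Em U = (\<chi> r c. (U$r$c - mat 1$r$c)/2)"

lemma intmat_mult: "intmat A \<Longrightarrow> intmat B \<Longrightarrow> intmat (A ** B)"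
  unfolding intmat_def matrix_matrix_mult_def by (auto intro!: Ints_sum Ints_mult)

lemma Em_mult:
  "Em (A ** U) = Em A ** U + Em U"
proof -
  have m: "(\<Sum>k\<in>UNIV. mat 1 $ r $ k * U $ k $ c) = U $ r $ c" for r c
    using matrix_mul_lid[of U] unfolding matrix_matrix_mult_def vec_eq_iff by auto
  have "(\<Sum>k\<in>UNIV. (A $ r $ k - mat 1 $ r $ k) / 2 * U $ k $ c)
        = ((\<Sum>k\<in>UNIV. A $ r $ k * U $ k $ c) - (\<Sum>k\<in>UNIV. mat 1 $ r $ k * U $ k $ c)) / 2" for r c
    by (simp add: sum_subtractf sum_divide_distrib[symmetric] left_diff_distrib)
  then show ?thesis using m
    unfolding Em_def matrix_matrix_mult_def vec_eq_iff by (auto simp: field_simps)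
qed

lemma intmat_add: "intmat A \<Longrightarrow> intmat B \<Longrightarrow> intmat (A + B)"
  unfolding intmat_def by auto

lemma intmat_S: "intmat (S_gen i)" "intmat (Em (S_gen i))"
  "intmat (S_gen_perp i)" "intmat (Em (S_gen_perp i))"
  unfolding intmat_def Em_def S_gen_perp_def S_gen_def transpose_def mat_def by auto

lemma SA_int: "U \<in> SA \<Longrightarrow> intmat U \<and> intmat (Em U)"
proof (induct U rule: SA_induct)
  case id then show ?case unfolding intmat_def Em_def mat_def by auto
next
  case (S U i) then show ?case by (simp add: Em_mult intmat_add intmat_mult intmat_S)
next
  case (Sp U i) then show ?case by (simp add: Em_mult intmat_add intmat_mult intmat_S)
qed

definition M0 :: "real^4^4" where "M0 = (\<chi> r c. if r = c then 1 else -1)"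
definition Qm :: "real^4^4" where
  "Qm = (\<chi> i. if i = 1 then mkrow 0 (-1/2) 0 0 else if i = 2 then mkrow (-1/2) 0 0 0
           else if i = 3 then mkrow 0 0 1 0 else mkrow 0 0 0 1)"

lemma S_M0: "S_gen i ** M0 ** transpose (S_gen i) = M0"
  using exhaust_4[of i]
  by (auto simp: S_gen_def M0_def matrix_matrix_mult_def transpose_def vec_eq_iff sum_4 forall_4)

lemma Sp_M0: "S_gen_perp i ** M0 ** transpose (S_gen_perp i) = M0"
  using exhaust_4[of i]
  by (auto simp: S_gen_perp_def S_gen_def M0_def matrix_matrix_mult_def transpose_def vec_eq_iff sum_4 forall_4)

lemma W_Q: "W_D1 ** Qm ** transpose W_D1 = M0"
  by (auto simp: W_D1_def Qm_def mkrow_def M0_def matrix_matrix_mult_def transpose_def vec_eq_iff sum_4 forall_4)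

lemma SA_M0: "U \<in> SA \<Longrightarrow> U ** M0 ** transpose U = M0"
proof (induct U rule: SA_induct)
  case id then show ?case by simp
next
  case (S U i)
  have "S_gen i ** U ** M0 ** transpose (S_gen i ** U) = S_gen i ** (U ** M0 ** transpose U) ** transpose (S_gen i)"
    by (simp add: matrix_transpose_mul matrix_mul_assoc)
  then show ?case using S S_M0 by simp
next
  case (Sp U i)
  have "S_gen_perp i ** U ** M0 ** transpose (S_gen_perp i ** U) = S_gen_perp i ** (U ** M0 ** transpose U) ** transpose (S_gen_perp i)"
    by (simp add: matrix_transpose_mul matrix_mul_assoc)
  then show ?case using Sp Sp_M0 by simp
qed

lemma quad_entry: "(X ** Qm ** transpose X) $ i $ i = - (X$i$1 * X$i$2) + (X$i$3)^2 + (X$i$4)^2"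
  by (simp add: Qm_def mkrow_def matrix_matrix_mult_def transpose_def sum_4 power2_eq_square algebra_simps)

lemma decomp: "(U ** X) $ i $ j = X $ i $ j + 2 * (Em U ** X) $ i $ j"
proof -
  have m: "(\<Sum>k\<in>UNIV. mat 1 $ r $ k * X $ k $ c) = X $ r $ c" for r c
    using matrix_mul_lid[of X] unfolding matrix_matrix_mult_def vec_eq_iff by auto
  have "(\<Sum>k\<in>UNIV. (U $ i $ k - mat 1 $ i $ k) / 2 * X $ k $ j)
        = ((\<Sum>k\<in>UNIV. U $ i $ k * X $ k $ j) - (\<Sum>k\<in>UNIV. mat 1 $ i $ k * X $ k $ j)) / 2"
    by (simp add: sum_subtractf sum_divide_distrib[symmetric] left_diff_distrib)
  then show ?thesis using m[of i j]
    unfolding Em_def matrix_matrix_mult_def by (auto simp: field_simps)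
qed

lemma row_props:
  assumes U: "U \<in> SA" and v: "v = (U ** W_D1) $ i"
  shows "v$1 \<in> \<int> \<and> v$2 \<in> \<int> \<and> v$3 \<in> \<int> \<and> v$4 \<in> \<int>
      \<and> - (v$1 * v$2) + (v$3)^2 + (v$4)^2 = 1
      \<and> ((v$2/2 \<in> \<int> \<and> v$3/2 \<in> \<int>) \<or> ((v$2-1)/2 \<in> \<int> \<and> (v$3-1)/2 \<in> \<int> \<and> v$4/2 \<in> \<int>))"
proof -
  have I: "intmat (Em U ** W_D1)"
    using SA_int[OF U] by (intro intmat_mult) (auto simp: intmat_def W_D1_def mkrow_def)
  have z: "v$j = W_D1$i$j + 2 * (Em U ** W_D1)$i$j" "(Em U ** W_D1)$i$j \<in> \<int>" for j
    using decomp[of U W_D1 i j] v I unfolding intmat_def by auto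
  have q: "- (v$1 * v$2) + (v$3)^2 + (v$4)^2 = 1"
  proof -
    have "(U ** W_D1) ** Qm ** transpose (U ** W_D1) = U ** (W_D1 ** Qm ** transpose W_D1) ** transpose U"
      by (simp add: matrix_transpose_mul matrix_mul_assoc)
    also have "\<dots> = M0" using W_Q SA_M0[OF U] by simp
    finally show ?thesis using quad_entry[of "U ** W_D1" i] v by (simp add: M0_def)
  qed
  have w: "W_D1$i$j \<in> \<int>" for j by (auto simp: W_D1_def mkrow_def)
  have ints: "v$j \<in> \<int>" for j using z[of j] w[of j] by auto
  have md: "(v$2/2 \<in> \<int> \<and> v$3/2 \<in> \<int>) \<or> ((v$2-1)/2 \<in> \<int> \<and> (v$3-1)/2 \<in> \<int> \<and> v$4/2 \<in> \<int>)"
  proof -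
    let ?z = "\<lambda>j. (Em U ** W_D1)$i$j"
    have e: "v$2/2 = W_D1$i$2/2 + ?z 2" "v$3/2 = W_D1$i$3/2 + ?z 3" "v$4/2 = W_D1$i$4/2 + ?z 4"
            "(v$2-1)/2 = (W_D1$i$2 - 1)/2 + ?z 2" "(v$3-1)/2 = (W_D1$i$3 - 1)/2 + ?z 3"
      using z by (auto simp: field_simps)
    have zz: "?z 2 \<in> \<int>" "?z 3 \<in> \<int>" "?z 4 \<in> \<int>" using z by auto
    have zm: "?z 3 - 1 \<in> \<int>" using zz by (simp add: Ints_diff)
    have W: "W_D1$1$2 = 0" "W_D1$1$3 = 0" "W_D1$2$2 = 0" "W_D1$2$3 = 0"
      "W_D1$3$2 = 1" "W_D1$3$3 = 1" "W_D1$3$4 = 0" "W_D1$4$2 = 1" "W_D1$4$3 = -1" "W_D1$4$4 = 0"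
      by (simp_all add: W_D1_def mkrow_def)
    consider "i = 1" | "i = 2" | "i = 3" | "i = 4" using exhaust_4[of i] by blast
    then show ?thesis
    proof cases
      case 1
      then have "v$2/2 = ?z 2" "v$3/2 = ?z 3" using e W by simp_all
      then show ?thesis using zz by simp
    next
      case 2
      then have "v$2/2 = ?z 2" "v$3/2 = ?z 3" using e W by simp_all
      then show ?thesis using zz by simp
    next
      case 3
      then have "(v$2-1)/2 = ?z 2" "(v$3-1)/2 = ?z 3" "v$4/2 = ?z 4" using e W by simp_all
      then show ?thesis using zz by simp
    next
      case 4
      then have "(v$2-1)/2 = ?z 2" "(v$3-1)/2 = ?z 3 - 1" "v$4/2 = ?z 4" using e W by simp_all
      then have "(v$2-1)/2 \<in> \<int> \<and> (v$3-1)/2 \<in> \<int> \<and> v$4/2 \<in> \<int>" using zz zm by (simp only:)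
      then show ?thesis by blast
    qed
  qed
  show ?thesis using ints q md by blast
qed

lemma mkrow_nth[simp]: "mkrow a b c d $ 1 = a" "mkrow a b c d $ 2 = b" "mkrow a b c d $ 3 = c" "mkrow a b c d $ 4 = d"
  by (simp_all add: mkrow_def)
lemma pt_nth[simp]: "pt x y $ 1 = x" "pt x y $ 2 = y"
  by (simp_all add: pt_def)
lemma pt_eta: "pt (p$1) (p$2) = p"
  unfolding pt_def vec_eq_iff using exhaust_2 by auto
lemma dist2: "dist (p::real^2) q = sqrt ((p$1-q$1)^2 + (p$2-q$2)^2)"
  by (simp add: dist_vec_def L2_set_def sum_2 dist_real_def)
lemma mem_circle: "q \<in> circle_of_row v \<longleftrightarrow>
   (if v$2 \<noteq> 0 then (v$3/v$2 - q$1)^2 + (v$4/v$2 - q$2)^2 = (1/v$2)^2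
    else q$1 * v$3 + q$2 * v$4 = v$1/2)"
proof (cases "v$2 = 0")
  case True then show ?thesis by (simp add: circle_of_row_def)
next
  case False
  have "1/\<bar>v$2\<bar> = sqrt ((1/v$2)^2)" by (simp add: real_sqrt_abs)
  then have "q \<in> circle_of_row v \<longleftrightarrow> sqrt ((v$3/v$2 - q$1)^2 + (v$4/v$2 - q$2)^2) = sqrt ((1/v$2)^2)"
    using False by (simp add: circle_of_row_def dist2)
  then show ?thesis using False by (simp only: real_sqrt_eq_iff) simp
qed

lemma img_by_inv:
  assumes "\<And>p. h (g p) = p" "\<And>q. g (h q) = q"
  shows "g ` A = {q. h q \<in> A}"
  using assms by (auto simp: image_iff) (metis)

definition Gtx :: "real^4^4" where
  "Gtx = (\<chi> i. if i = 1 then mkrow 1 0 0 0 else if i = 2 then mkrow 4 1 2 0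
           else if i = 3 then mkrow 4 0 1 0 else mkrow 0 0 0 1)"
definition Gty :: "real^4^4" where
  "Gty = (\<chi> i. if i = 1 then mkrow 1 0 0 0 else if i = 2 then mkrow 4 1 0 2
           else if i = 3 then mkrow 0 0 1 0 else mkrow 4 0 0 1)"
definition Grx :: "real^4^4" where
  "Grx = (\<chi> i. if i = 1 then mkrow 1 0 0 0 else if i = 2 then mkrow 0 1 0 0
           else if i = 3 then mkrow 0 0 (-1) 0 else mkrow 0 0 0 1)"
definition Gry :: "real^4^4" where
  "Gry = (\<chi> i. if i = 1 then mkrow 1 0 0 0 else if i = 2 then mkrow 0 1 0 0
           else if i = 3 then mkrow 0 0 1 0 else mkrow 0 0 0 (-1))"

lemma vG: "v v* Gtx = mkrow (v$1 + 4 * v$2 + 4 * v$3) (v$2) (2 * v$2 + v$3) (v$4)"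
  "v v* Gty = mkrow (v$1 + 4 * v$2 + 4 * v$4) (v$2) (v$3) (2 * v$2 + v$4)"
  "v v* Grx = mkrow (v$1) (v$2) (- v$3) (v$4)"
  "v v* Gry = mkrow (v$1) (v$2) (v$3) (- v$4)"
  by (simp_all add: vec_eq_iff forall_4 vector_matrix_mult_def sum_4 Gtx_def Gty_def Grx_def Gry_def)

lemma img_tx: "transl_x ` circle_of_row v = circle_of_row (v v* Gtx)"
proof -
  have "transl_x ` circle_of_row v = {q. pt (q$1 - 2) (q$2) \<in> circle_of_row v}"
    by (rule img_by_inv) (simp_all add: transl_x_def pt_eta)
  also have "\<dots> = circle_of_row (v v* Gtx)"
  proof (rule set_eqI)
    fix q :: "real^2"
    show "q \<in> {q. pt (q$1 - 2) (q$2) \<in> circle_of_row v} \<longleftrightarrow> q \<in> circle_of_row (v v* Gtx)"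
    proof (cases "v$2 = 0")
      case True
      have "(q$1 - 2) * v$3 + q$2 * v$4 = v$1/2 \<longleftrightarrow> q$1 * (2 * v$2 + v$3) + q$2 * v$4 = (v$1 + 4 * v$2 + 4 * v$3)/2"
        using True by (auto simp: field_simps)
      then show ?thesis using True by (simp add: mem_circle vG)
    next
      case False
      have h: "v$3/v$2 - (q$1 - 2) = (2 * v$2 + v$3)/v$2 - q$1" using False by (simp add: field_simps)
      show ?thesis using False unfolding mem_circle vG mkrow_nth mem_Collect_eq pt_nth h by simp
    qed
  qed
  finally show ?thesis .
qed

lemma img_ty: "transl_y ` circle_of_row v = circle_of_row (v v* Gty)"
proof -
  have "transl_y ` circle_of_row v = {q. pt (q$1) (q$2 - 2) \<in> circle_of_row v}"
    by (rule img_by_inv) (simp_all add: transl_y_def pt_eta)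
  also have "\<dots> = circle_of_row (v v* Gty)"
  proof (rule set_eqI)
    fix q :: "real^2"
    show "q \<in> {q. pt (q$1) (q$2 - 2) \<in> circle_of_row v} \<longleftrightarrow> q \<in> circle_of_row (v v* Gty)"
    proof (cases "v$2 = 0")
      case True
      have "q$1 * v$3 + (q$2 - 2) * v$4 = v$1/2 \<longleftrightarrow> q$1 * v$3 + q$2 * (2 * v$2 + v$4) = (v$1 + 4 * v$2 + 4 * v$4)/2"
        using True by (auto simp: field_simps)
      then show ?thesis using True by (simp add: mem_circle vG)
    next
      case False
      have h: "v$4/v$2 - (q$2 - 2) = (2 * v$2 + v$4)/v$2 - q$2" using False by (simp add: field_simps)
      show ?thesis using False unfolding mem_circle vG mkrow_nth mem_Collect_eq pt_nth h by simp
    qed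
  qed
  finally show ?thesis .
qed

lemma rx1: "refl_x ` circle_of_row v = {q. pt (- q$1) (q$2) \<in> circle_of_row v}"
    by (rule img_by_inv) (simp_all add: refl_x_def pt_eta)

lemma rx2: "v$2 = 0 \<Longrightarrow> pt (- q$1) (q$2) \<in> circle_of_row v \<longleftrightarrow> q \<in> circle_of_row (v v* Grx)"
  by (simp add: mem_circle vG)
lemma rx3: "v$2 \<noteq> 0 \<Longrightarrow> pt (- q$1) (q$2) \<in> circle_of_row v \<longleftrightarrow> q \<in> circle_of_row (v v* Grx)"
  unfolding mem_circle vG mkrow_nth pt_nth 
  by (simp add: power2_eq_square algebra_simps)

lemma img_rx: "refl_x ` circle_of_row v = circle_of_row (v v* Grx)"
  unfolding rx1 using rx2 rx3 by blast

lemma ry1: "refl_y ` circle_of_row v = {q. pt (q$1) (- q$2) \<in> circle_of_row v}"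
    by (rule img_by_inv) (simp_all add: refl_y_def pt_eta)
lemma ry2: "v$2 = 0 \<Longrightarrow> pt (q$1) (- q$2) \<in> circle_of_row v \<longleftrightarrow> q \<in> circle_of_row (v v* Gry)"
  by (simp add: mem_circle vG)
lemma ry3: "v$2 \<noteq> 0 \<Longrightarrow> pt (q$1) (- q$2) \<in> circle_of_row v \<longleftrightarrow> q \<in> circle_of_row (v v* Gry)"
  unfolding mem_circle vG mkrow_nth pt_nth 
  by (simp add: power2_eq_square algebra_simps)
lemma img_ry: "refl_y ` circle_of_row v = circle_of_row (v v* Gry)"
  unfolding ry1 using ry2 ry3 by blast

lemma row_mult: "(X ** G) $ i = X $ i v* G"
  by (simp add: vec_eq_iff matrix_matrix_mult_def vector_matrix_mult_def mult.commute)

lemma WG_eq: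
  assumes "\<forall>i j. (W_D1 ** G)$i$j = (V ** W_D1)$(p i)$j"
  shows "W_D1 ** G = Pm p ** V ** W_D1"
proof -
  have "Pm p ** V ** W_D1 = Pm p ** (V ** W_D1)" by (simp add: matrix_mul_assoc)
  then show ?thesis using assms by (simp add: vec_eq_iff Pm_row)
qed

lemma WG_tx: "W_D1 ** Gtx = Pm (sw 3 4) ** S_gen 4 ** W_D1"
  by (rule WG_eq) (simp add: forall_4 sw_def W_D1_def Gtx_def S_gen_def matrix_matrix_mult_def sum_4)
lemma WG_ty: "W_D1 ** Gty = Pm (sw 1 2) ** S_gen_perp 1 ** W_D1"
  by (rule WG_eq) (simp add: forall_4 sw_def W_D1_def Gty_def S_gen_perp_def S_gen_def transpose_def matrix_matrix_mult_def sum_4)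
lemma WG_rx: "W_D1 ** Grx = Pm (sw 3 4) ** mat 1 ** W_D1"
  by (rule WG_eq) (simp add: forall_4 sw_def W_D1_def Grx_def mat_def matrix_matrix_mult_def sum_4)
lemma WG_ry: "W_D1 ** Gry = Pm (sw 1 2) ** mat 1 ** W_D1"
  by (rule WG_eq) (simp add: forall_4 sw_def W_D1_def Gry_def mat_def matrix_matrix_mult_def sum_4)

lemma pack_inv:
  assumes img: "\<And>v. g ` circle_of_row v = circle_of_row (v v* G)"
  and WG: "W_D1 ** G = Pm p ** V ** W_D1" and V: "V \<in> SA" "V ** V = mat 1"
  and inv: "\<And>x. p (p x) = x"
  shows "(\<lambda>C. g ` C) ` standard_super_packing = standard_super_packing"
proof -
  have key: "g ` circle_of_row ((U ** W_D1) $ i) = circle_of_row ((cj p U ** V ** W_D1) $ p i)" for U i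
  proof -
    have "(U ** W_D1) ** G = U ** (Pm p ** V ** W_D1)" by (simp add: WG flip: matrix_mul_assoc)
    also have "\<dots> = (U ** Pm p) ** V ** W_D1" by (simp add: matrix_mul_assoc)
    also have "\<dots> = (Pm p ** cj p U) ** V ** W_D1" by (simp add: Pm_comm inv)
    also have "\<dots> = Pm p ** (cj p U ** V ** W_D1)" by (simp add: matrix_mul_assoc)
    finally have e: "(U ** W_D1) ** G = Pm p ** (cj p U ** V ** W_D1)" .
    have "g ` circle_of_row ((U ** W_D1) $ i) = circle_of_row (((U ** W_D1) ** G) $ i)"
      by (simp add: img row_mult)
    then show ?thesis unfolding e Pm_row .
  qed
  show ?thesis
    unfolding standard_super_packing_def geometric_super_packing_def
  proof (rule set_eqI, rule iffI)
    fix C assume "C \<in> (\<lambda>C. g ` C) ` {circle_of_row ((U ** W_D1) $ i) |U i. U \<in> SA}"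
    then obtain U i where U: "U \<in> SA" and C: "C = g ` circle_of_row ((U ** W_D1) $ i)" by auto
    have "cj p U ** V \<in> SA" using SA_mult cj_SA[OF inv U] V by blast
    then show "C \<in> {circle_of_row ((U ** W_D1) $ i) |U i. U \<in> SA}"
      unfolding C key by blast
  next
    fix C assume "C \<in> {circle_of_row ((U ** W_D1) $ i) |U i. U \<in> SA}"
    then obtain U' j where U': "U' \<in> SA" and C: "C = circle_of_row ((U' ** W_D1) $ j)" by auto
    define U where "U = cj p (U' ** V)"
    have U: "U \<in> SA" unfolding U_def using SA_mult cj_SA[OF inv] U' V by blast
    have "cj p U ** V = U' ** V ** V" unfolding U_def by (simp add: cj_cj inv)
    also have "\<dots> = U'" using V by (simp flip: matrix_mul_assoc)
    finally have "g ` circle_of_row ((U ** W_D1) $ p j) = C" unfolding key C by (simp add: inv)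
    then show "C \<in> (\<lambda>C. g ` C) ` {circle_of_row ((U ** W_D1) $ i) |U i. U \<in> SA}"
      using U by blast
  qed
qed

lemma gens_inv: "leaves_invariant transl_x standard_super_packing"
  "leaves_invariant transl_y standard_super_packing"
  "leaves_invariant refl_x standard_super_packing"
  "leaves_invariant refl_y standard_super_packing"
  unfolding leaves_invariant_def
     apply (rule pack_inv[OF img_tx WG_tx SA_S SS sw_invol])
    apply (rule pack_inv[OF img_ty WG_ty SA_Sp SpSp sw_invol])
   apply (rule pack_inv[OF img_rx WG_rx super_apollonian_group.id _ sw_invol], simp)
  apply (rule pack_inv[OF img_ry WG_ry super_apollonian_group.id _ sw_invol], simp)
  done

abbreviation MG where "MG \<equiv> motion_group"

definition itx :: "real^2 \<Rightarrow> real^2" where "itx p = pt (p$1 - 2) (p$2)"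
definition ity :: "real^2 \<Rightarrow> real^2" where "ity p = pt (p$1) (p$2 - 2)"

lemma inv_tx: "inv transl_x = itx"
  by (rule inv_equality) (simp_all add: itx_def transl_x_def pt_eta)
lemma inv_ty: "inv transl_y = ity"
  by (rule inv_equality) (simp_all add: ity_def transl_y_def pt_eta)
lemma inv_rx: "inv refl_x = refl_x"
  by (rule inv_equality) (simp_all add: refl_x_def pt_eta)
lemma inv_ry: "inv refl_y = refl_y"
  by (rule inv_equality) (simp_all add: refl_y_def pt_eta)

lemma inv_gen:
  assumes "g \<in> motion_gens"
  shows "\<exists>h. inv g = h \<and> (\<forall>p. h (g p) = p) \<and> (\<forall>p. g (h p) = p)"
  using assms unfolding motion_gens_def
  by (auto simp: inv_tx inv_ty inv_rx inv_ry itx_def ity_def transl_x_def transl_y_def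
      refl_x_def refl_y_def pt_eta)

lemma iso_gen: "g \<in> motion_gens \<Longrightarrow> euclidean_motion g"
  unfolding motion_gens_def euclidean_motion_def
  by (auto simp: dist2 transl_x_def transl_y_def refl_x_def refl_y_def power2_commute)

lemma inv_gen_props:
  assumes "g \<in> motion_gens"
  shows "euclidean_motion (inv g)" "leaves_invariant (inv g) standard_super_packing"
proof -
  obtain h where h: "inv g = h" "\<And>p. h (g p) = p" "\<And>p. g (h p) = p" using inv_gen[OF assms] by blast
  have gi: "euclidean_motion g" using iso_gen[OF assms] .
  show "euclidean_motion (inv g)" unfolding h(1) euclidean_motion_def
  proof (intro allI)
    fix p q show "dist (h p) (h q) = dist p q"
      using gi unfolding euclidean_motion_def by (metis h(3))
  qed
  have gl: "leaves_invariant g standard_super_packing"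
    using assms gens_inv unfolding motion_gens_def by auto
  have "(\<lambda>C. h ` C) ` ((\<lambda>C. g ` C) ` standard_super_packing) = standard_super_packing"
    by (simp add: image_image image_comp h(2) comp_def)
  then show "leaves_invariant (inv g) standard_super_packing"
    using gl unfolding leaves_invariant_def h(1) by simp
qed

lemma li_comp:
  assumes "leaves_invariant g P" "leaves_invariant f P"
  shows "leaves_invariant (g \<circ> f) P"
proof -
  have e: "(\<lambda>C. (g \<circ> f) ` C) = (\<lambda>C. g ` C) \<circ> (\<lambda>C. f ` C)" by (auto simp: image_comp fun_eq_iff)
  show ?thesis using assms unfolding leaves_invariant_def e image_comp[symmetric] by simp
qed

lemma em_comp:
  assumes "euclidean_motion g" "euclidean_motion f"
  shows "euclidean_motion (g \<circ> f)"
  using assms unfolding euclidean_motion_def by simp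

lemma MG_sub: "f \<in> MG \<Longrightarrow> euclidean_motion f \<and> leaves_invariant f standard_super_packing"
proof (induct rule: motion_group.induct)
  case id then show ?case by (simp add: euclidean_motion_def leaves_invariant_def)
next
  case (gen f g)
  have "euclidean_motion g" "leaves_invariant g standard_super_packing"
    using iso_gen gen gens_inv unfolding motion_gens_def by auto
  then show ?case using gen li_comp em_comp by blast
next
  case (geninv f g)
  have "euclidean_motion (inv g)" "leaves_invariant (inv g) standard_super_packing"
    using inv_gen_props geninv by auto
  then show ?case using geninv li_comp em_comp by blast
qed


lemma txgen: "transl_x \<in> motion_gens" "transl_y \<in> motion_gens" "refl_x \<in> motion_gens" "refl_y \<in> motion_gens"
  by (simp_all add: motion_gens_def)

lemma MG_tx_nat: "f \<in> MG \<Longrightarrow> (\<lambda>p. pt (f p $ 1 + 2 * real n) (f p $ 2)) \<in> MG \<and> (\<lambda>p. pt (f p $ 1 - 2 * real n) (f p $ 2)) \<in> MG"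
proof (induct n)
  case 0 then show ?case by (simp add: pt_eta)
next
  case (Suc n)
  have a: "(\<lambda>p. pt (f p $ 1 + 2 * real (Suc n)) (f p $ 2)) = transl_x \<circ> (\<lambda>p. pt (f p $ 1 + 2 * real n) (f p $ 2))"
    by (auto simp: transl_x_def fun_eq_iff algebra_simps)
  have b: "(\<lambda>p. pt (f p $ 1 - 2 * real (Suc n)) (f p $ 2)) = inv transl_x \<circ> (\<lambda>p. pt (f p $ 1 - 2 * real n) (f p $ 2))"
    by (auto simp: inv_tx itx_def fun_eq_iff algebra_simps)
  show ?case unfolding a b using Suc txgen by (auto intro: motion_group.gen motion_group.geninv)
qed

lemma MG_ty_nat: "f \<in> MG \<Longrightarrow> (\<lambda>p. pt (f p $ 1) (f p $ 2 + 2 * real n)) \<in> MG \<and> (\<lambda>p. pt (f p $ 1) (f p $ 2 - 2 * real n)) \<in> MG"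
proof (induct n)
  case 0 then show ?case by (simp add: pt_eta)
next
  case (Suc n)
  have a: "(\<lambda>p. pt (f p $ 1) (f p $ 2 + 2 * real (Suc n))) = transl_y \<circ> (\<lambda>p. pt (f p $ 1) (f p $ 2 + 2 * real n))"
    by (auto simp: transl_y_def fun_eq_iff algebra_simps)
  have b: "(\<lambda>p. pt (f p $ 1) (f p $ 2 - 2 * real (Suc n))) = inv transl_y \<circ> (\<lambda>p. pt (f p $ 1) (f p $ 2 - 2 * real n))"
    by (auto simp: inv_ty ity_def fun_eq_iff algebra_simps)
  show ?case unfolding a b using Suc txgen by (auto intro: motion_group.gen motion_group.geninv)
qed

lemma MG_tx: assumes "f \<in> MG" "a \<in> \<int>" shows "(\<lambda>p. pt (f p $ 1 + 2 * a) (f p $ 2)) \<in> MG"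
proof -
  obtain k where k: "a = of_int k" using assms(2) Ints_cases by blast
  show ?thesis
  proof (cases "k \<ge> 0")
    case True
    then have "a = real (nat k)" using k by simp
    then show ?thesis using MG_tx_nat[OF assms(1), of "nat k"] by simp
  next
    case False
    then have "a = - real (nat (-k))" using k by simp
    then show ?thesis using MG_tx_nat[OF assms(1), of "nat (-k)"] by simp
  qed
qed

lemma MG_ty: assumes "f \<in> MG" "a \<in> \<int>" shows "(\<lambda>p. pt (f p $ 1) (f p $ 2 + 2 * a)) \<in> MG"
proof -
  obtain k where k: "a = of_int k" using assms(2) Ints_cases by blast
  show ?thesis
  proof (cases "k \<ge> 0")
    case True
    then have "a = real (nat k)" using k by simp
    then show ?thesis using MG_ty_nat[OF assms(1), of "nat k"] by simp
  next
    case False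
    then have "a = - real (nat (-k))" using k by simp
    then show ?thesis using MG_ty_nat[OF assms(1), of "nat (-k)"] by simp
  qed
qed

lemma MG_refl: assumes "s1 = 1 \<or> s1 = -1" "s2 = 1 \<or> s2 = -1"
  shows "(\<lambda>p. pt (s1 * p$1) (s2 * p$2)) \<in> MG"
proof -
  have i: "id \<in> MG" by (rule motion_group.id)
  have r1: "refl_x \<circ> id \<in> MG" "refl_y \<circ> id \<in> MG"
    by (rule motion_group.gen[OF i txgen(3)], rule motion_group.gen[OF i txgen(4)])
  have r2: "refl_y \<circ> (refl_x \<circ> id) \<in> MG" by (rule motion_group.gen[OF r1(1) txgen(4)])
  have e: "id = (\<lambda>p::real^2. pt (p$1) (p$2))" by (simp add: pt_eta fun_eq_iff)
  show ?thesis using assms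
  proof (elim disjE)
    assume "s1 = 1" "s2 = 1" then show ?thesis using i e by simp
  next
    assume "s1 = 1" "s2 = -1" then show ?thesis using r1 by (simp add: refl_y_def comp_def)
  next
    assume "s1 = -1" "s2 = 1" then show ?thesis using r1 by (simp add: refl_x_def comp_def)
  next
    assume "s1 = -1" "s2 = -1" then show ?thesis using r2 by (simp add: refl_x_def refl_y_def comp_def)
  qed
qed

lemma MG_aff: assumes "s1 = 1 \<or> s1 = -1" "s2 = 1 \<or> s2 = -1" "a \<in> \<int>" "b \<in> \<int>"
  shows "(\<lambda>p. pt (s1 * p$1 + 2 * a) (s2 * p$2 + 2 * b)) \<in> MG"
proof -
  have "(\<lambda>p. pt (s1 * p$1 + 2 * a) (s2 * p$2)) \<in> MG"
    using MG_tx[OF MG_refl[OF assms(1,2)] assms(3)] by simp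
  from MG_ty[OF this assms(4)] show ?thesis by simp
qed

lemma iso_affine:
  assumes f: "euclidean_motion f"
  shows "\<exists>\<alpha> \<beta> \<gamma> \<delta> c1 c2. (\<forall>p. f p = pt (\<alpha> * p$1 + \<beta> * p$2 + c1) (\<gamma> * p$1 + \<delta> * p$2 + c2))
     \<and> \<alpha>^2 + \<gamma>^2 = 1 \<and> \<beta>^2 + \<delta>^2 = 1 \<and> \<alpha> * \<beta> + \<gamma> * \<delta> = 0"
proof -
  define L where "L p = f p - f 0" for p
  have d: "\<forall>x y. dist (L x) (L y) = dist x y"
  proof (intro allI)
    fix x y
    have "(f x - f 0) - (f y - f 0) = f x - f y" by (simp add: algebra_simps)
    then have "dist (L x) (L y) = dist (f x) (f y)" unfolding L_def dist_norm by simp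
    then show "dist (L x) (L y) = dist x y" using f unfolding euclidean_motion_def by simp
  qed
  have L0: "L 0 = 0" by (simp add: L_def)
  have lin: "linear L" by (rule isometry_linear[OF L0 d])
  have dec: "p = p$1 *\<^sub>R pt 1 0 + p$2 *\<^sub>R pt 0 1" for p :: "real^2"
    unfolding vec_eq_iff forall_2 by (simp add: pt_def)
  have Lp: "L p = p$1 *\<^sub>R L (pt 1 0) + p$2 *\<^sub>R L (pt 0 1)" for p
    by (subst dec) (simp add: linear_add[OF lin] linear_scale[OF lin])
  define \<alpha> where "\<alpha> = L (pt 1 0) $ 1"
  define \<gamma> where "\<gamma> = L (pt 1 0) $ 2"
  define \<beta> where "\<beta> = L (pt 0 1) $ 1"
  define \<delta> where "\<delta> = L (pt 0 1) $ 2"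
  define c1 where "c1 = f 0 $ 1"
  define c2 where "c2 = f 0 $ 2"
  have fp: "f p = pt (\<alpha> * p$1 + \<beta> * p$2 + c1) (\<gamma> * p$1 + \<delta> * p$2 + c2)" for p
  proof -
    have "f p = f 0 + (p$1 *\<^sub>R L (pt 1 0) + p$2 *\<^sub>R L (pt 0 1))"
      using Lp[of p] unfolding L_def[of p] by (simp add: algebra_simps)
    then show ?thesis unfolding vec_eq_iff forall_2
      by (simp add: \<alpha>_def \<beta>_def \<gamma>_def \<delta>_def c1_def c2_def algebra_simps)
  qed
  have z: "(0::real^2) = pt 0 0" by (simp add: vec_eq_iff forall_2)
  have e1: "dist (f (pt 1 0)) (f (pt 0 0)) = 1" "dist (f (pt 0 1)) (f (pt 0 0)) = 1"
     "dist (f (pt 1 0)) (f (pt 0 1)) = sqrt 2"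
    using f unfolding euclidean_motion_def by (simp_all add: dist2)
  have s1: "sqrt (\<alpha>^2 + \<gamma>^2) = sqrt 1" using e1(1) by (simp add: fp dist2)
  have s2: "sqrt (\<beta>^2 + \<delta>^2) = sqrt 1" using e1(2) by (simp add: fp dist2)
  have s3: "sqrt ((\<alpha> - \<beta>)^2 + (\<gamma> - \<delta>)^2) = sqrt 2" using e1(3) by (simp add: fp dist2)
  have q1: "\<alpha>^2 + \<gamma>^2 = 1" using s1 by (simp only: real_sqrt_eq_iff)
  have q2: "\<beta>^2 + \<delta>^2 = 1" using s2 by (simp only: real_sqrt_eq_iff)
  have q3: "(\<alpha> - \<beta>)^2 + (\<gamma> - \<delta>)^2 = 2" using s3 by (simp only: real_sqrt_eq_iff)
  have q4: "\<alpha> * \<beta> + \<gamma> * \<delta> = 0" using q1 q2 q3 by (simp add: power2_eq_square algebra_simps)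
  show ?thesis using fp q1 q2 q4 by blast
qed


lemma half_odd_not_int: "(1/2::real) \<notin> \<int>" "(-1/2::real) \<notin> \<int>"
proof -
  show "(1/2::real) \<notin> \<int>"
  proof
    assume "(1/2::real) \<in> \<int>"
    then obtain k where "(1/2::real) = of_int k" by (auto elim: Ints_cases)
    then have "of_int (2*k) = (of_int 1::real)" by simp
    then have "2*k = 1" by (simp only: of_int_eq_iff)
    then show False by presburger
  qed
  show "(-1/2::real) \<notin> \<int>"
  proof
    assume "(-1/2::real) \<in> \<int>"
    then obtain k where "(-1/2::real) = of_int k" by (auto elim: Ints_cases)
    then have "of_int (2*k) = (of_int (-1)::real)" by simp
    then have "2*k = -1" by (simp only: of_int_eq_iff)
    then show False by presburger
  qed
qed

lemma line_row:
  assumes U: "U \<in> SA" and v: "v = (U ** W_D1) $ i" and z: "v$2 = 0"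
  shows "v$3 = 0 \<and> (v$4)^2 = 1"
proof -
  note R = row_props[OF U v]
  have b1: "v$3/2 \<in> \<int>" using R z half_odd_not_int by auto
  have sq: "(v$3)^2 + (v$4)^2 = 1" using R z by simp
  obtain k where k: "v$3/2 = of_int k" using b1 by (auto elim: Ints_cases)
  have sq3: "(v$3)^2 \<le> 1" using sq zero_le_power2[of "v$4"] by linarith
  have a: "\<bar>v$3\<bar> \<le> 1" using sq3 abs_square_le_1 by blast
  have v3: "v$3 = 2 * of_int k" using k by simp
  have "real_of_int \<bar>k\<bar> < 1" using a unfolding v3 by simp
  then have "k = 0" by simp
  then have "v$3 = 0" using k by simp
  then show ?thesis using sq by simp
qed

lemma L1_in: "circle_of_row (W_D1 $ 1) \<in> standard_super_packing"
  "circle_of_row (W_D1 $ 3) \<in> standard_super_packing"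
  unfolding standard_super_packing_def geometric_super_packing_def
  using super_apollonian_group.id by (metis (mono_tags, lifting) matrix_mul_lid mem_Collect_eq)+

lemma L1_mem: "q \<in> circle_of_row (W_D1 $ 1) \<longleftrightarrow> q$2 = 1"
  by (simp add: mem_circle W_D1_def)

lemma C3_mem: "pt 0 0 \<in> circle_of_row (W_D1 $ 3)" "pt 2 0 \<in> circle_of_row (W_D1 $ 3)"
  "pt 1 1 \<in> circle_of_row (W_D1 $ 3)" "pt 1 (-1) \<in> circle_of_row (W_D1 $ 3)"
  by (simp_all add: mem_circle W_D1_def)


lemma in_pack_row:
  assumes "C \<in> standard_super_packing"
  obtains U i where "U \<in> SA" "C = circle_of_row ((U ** W_D1) $ i)"
  using assms unfolding standard_super_packing_def geometric_super_packing_def by blast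

lemma img_in_pack:
  assumes "leaves_invariant f standard_super_packing" "C \<in> standard_super_packing"
  shows "f ` C \<in> standard_super_packing"
  using assms unfolding leaves_invariant_def by blast

lemma main_dir:
  assumes fm: "euclidean_motion f" and fl: "leaves_invariant f standard_super_packing"
  shows "f \<in> MG"
proof -
  obtain \<alpha> \<beta> \<gamma> \<delta> c1 c2 where fp: "\<And>p. f p = pt (\<alpha> * p$1 + \<beta> * p$2 + c1) (\<gamma> * p$1 + \<delta> * p$2 + c2)"
    and q1: "\<alpha>^2 + \<gamma>^2 = 1" and q2: "\<beta>^2 + \<delta>^2 = 1" and q4: "\<alpha> * \<beta> + \<gamma> * \<delta> = 0"
    using iso_affine[OF fm] by blast
  have fd: "dist (f p) (f q) = dist p q" for p q using fm unfolding euclidean_motion_def by simp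
  obtain U i where U: "U \<in> SA" and Ue: "f ` circle_of_row (W_D1 $ 1) = circle_of_row ((U ** W_D1) $ i)"
    using img_in_pack[OF fl L1_in(1)] in_pack_row by metis
  define r where "r = (U ** W_D1) $ i"
  note Rr = row_props[OF U r_def]
  have inL: "f (pt t 1) \<in> circle_of_row r" for t
    using Ue L1_mem[of "pt t 1"] unfolding r_def by auto
  have r2: "r$2 = 0"
  proof (rule ccontr)
    assume nz: "r$2 \<noteq> 0"
    obtain k where k: "r$2 = of_int k" using Rr by (auto elim: Ints_cases)
    have "k \<noteq> 0" using nz k by simp
    then have "\<bar>r$2\<bar> \<ge> 1" using k by linarith
    then have rho: "1/\<bar>r$2\<bar> \<le> 1" by simp
    define c :: "real^2" where "c = (\<chi> k. if k = 1 then r$3 / r$2 else r$4 / r$2)"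
    have "dist c (f (pt t 1)) = 1/\<bar>r$2\<bar>" for t
      using inL[of t] nz unfolding circle_of_row_def c_def by simp
    then have "dist (f (pt 0 1)) (f (pt 3 1)) \<le> 2"
      using dist_triangle2[of "f (pt 0 1)" "f (pt 3 1)" c] rho by (simp add: dist_commute)
    moreover have "dist (f (pt 0 1)) (f (pt 3 1)) = 3"
      unfolding fd by (simp add: dist2)
    ultimately show False by simp
  qed
  have lr: "r$3 = 0 \<and> (r$4)^2 = 1" by (rule line_row[OF U r_def r2])
  have "(f (pt t 1))$2 * r$4 = r$1/2" for t
    using inL[of t] r2 lr unfolding mem_circle by simp
  from this[of 0] this[of 1] have h: "(\<delta> + c2) * r$4 = r$1/2" "(\<gamma> + \<delta> + c2) * r$4 = r$1/2"
    by (simp_all add: fp)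
  have "\<gamma> * r$4 = (\<gamma> + \<delta> + c2) * r$4 - (\<delta> + c2) * r$4" by (simp add: algebra_simps)
  then have "\<gamma> * r$4 = 0" using h by linarith
  then have g0: "\<gamma> = 0" using lr by auto
  have a2: "\<alpha>^2 = 1" using q1 g0 by simp
  have b0: "\<beta> = 0" using q4 g0 a2 by auto
  have d2: "\<delta>^2 = 1" using q2 b0 by simp
  have fp2: "f p = pt (\<alpha> * p$1 + c1) (\<delta> * p$2 + c2)" for p using fp[of p] g0 b0 by simp
  have av: "\<alpha> = 1 \<or> \<alpha> = -1" using a2 by (simp add: power2_eq_1_iff)
  have dv: "\<delta> = 1 \<or> \<delta> = -1" using d2 by (simp add: power2_eq_1_iff)
  obtain U' j where U': "U' \<in> SA" and Ue': "f ` circle_of_row (W_D1 $ 3) = circle_of_row ((U' ** W_D1) $ j)"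
    using img_in_pack[OF fl L1_in(2)] in_pack_row by metis
  define s where "s = (U' ** W_D1) $ j"
  note Rs = row_props[OF U' s_def]
  have inC: "f q \<in> circle_of_row s" if "q \<in> circle_of_row (W_D1 $ 3)" for q
    using Ue' that unfolding s_def by auto
  note P = inC[OF C3_mem(1)] inC[OF C3_mem(2)] inC[OF C3_mem(3)] inC[OF C3_mem(4)]
  have s2: "s$2 \<noteq> 0"
  proof
    assume z: "s$2 = 0"
    have ls: "s$3 = 0 \<and> (s$4)^2 = 1" by (rule line_row[OF U' s_def z])
    have e: "(\<delta> + c2) * s$4 = s$1/2" "(- \<delta> + c2) * s$4 = s$1/2"
      using P(3,4) z ls unfolding mem_circle by (simp_all add: fp2)
    have "\<delta> * s$4 = ((\<delta> + c2) * s$4 - (- \<delta> + c2) * s$4) / 2" by (simp add: algebra_simps)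
    also have "\<dots> = (s$1/2 - s$1/2) / 2" by (simp only: e)
    finally have "\<delta> * s$4 = 0" by simp
    then show False using ls dv by auto
  qed
  define X where "X = s$3 / s$2"
  define Y where "Y = s$4 / s$2"
  have E: "(X - c1)^2 + (Y - c2)^2 = (1/s$2)^2"
    "(X - (\<alpha> * 2 + c1))^2 + (Y - c2)^2 = (1/s$2)^2"
    "(X - (\<alpha> + c1))^2 + (Y - (\<delta> + c2))^2 = (1/s$2)^2"
    "(X - (\<alpha> + c1))^2 + (Y - (- \<delta> + c2))^2 = (1/s$2)^2"
    using P s2 unfolding mem_circle X_def Y_def by (simp_all add: fp2)
  have "(X - c1)^2 - (X - (\<alpha> * 2 + c1))^2 = 0" using E(1,2) by linarith
  moreover have "(X - c1)^2 - (X - (\<alpha> * 2 + c1))^2 = 4 * \<alpha> * (X - c1) - 4 * \<alpha>^2"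
    by (simp add: power2_eq_square algebra_simps)
  ultimately have "\<alpha> * (X - c1) = 1" using a2 by simp
  then have Xc: "X = \<alpha> + c1" using av by auto
  have "(Y - (\<delta> + c2))^2 - (Y - (- \<delta> + c2))^2 = 0" using E(3,4) by linarith
  moreover have "(Y - (\<delta> + c2))^2 - (Y - (- \<delta> + c2))^2 = - 4 * \<delta> * (Y - c2)"
    by (simp add: power2_eq_square algebra_simps)
  ultimately have "\<delta> * (Y - c2) = 0" by simp
  then have Yc: "Y = c2" using dv by auto
  have "(1/s$2)^2 = 1" using E(1) Xc Yc a2 by simp
  then have "(s$2)^2 = 1" by (simp add: power_divide)
  then have sv: "s$2 = 1 \<or> s$2 = -1" by (simp add: power2_eq_1_iff)
  then have "s$2/2 \<notin> \<int>" using half_odd_not_int by auto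
  then have par: "(s$3 - 1)/2 \<in> \<int>" "s$4/2 \<in> \<int>" using Rs by auto
  have c1i: "c1/2 \<in> \<int>"
  proof -
    have c1: "c1 = s$3 / s$2 - \<alpha>" using Xc X_def by simp
    obtain m where m: "(s$3 - 1)/2 = of_int m" using par(1) by (auto elim: Ints_cases)
    have s3: "s$3 = 2 * of_int m + 1" using m by (simp add: field_simps)
    have "c1/2 = of_int m \<or> c1/2 = of_int (m+1) \<or> c1/2 = of_int (-m-1) \<or> c1/2 = of_int (-m)"
      using sv av unfolding c1 s3 by (elim disjE) (simp_all add: field_simps)
    then show ?thesis by (metis Ints_of_int)
  qed
  have c2i: "c2/2 \<in> \<int>"
  proof -
    have c2: "c2 = s$4 / s$2" using Yc Y_def by simp
    have "- (s$4/2) \<in> \<int>" using par(2) by (auto intro: Ints_minus)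
    then show ?thesis using sv par(2) unfolding c2 by auto
  qed
  have "(\<lambda>p. pt (\<alpha> * p$1 + 2 * (c1/2)) (\<delta> * p$2 + 2 * (c2/2))) \<in> MG"
    by (rule MG_aff[OF av dv c1i c2i])
  moreover have "f = (\<lambda>p. pt (\<alpha> * p$1 + 2 * (c1/2)) (\<delta> * p$2 + 2 * (c2/2)))"
    by (simp add: fun_eq_iff fp2)
  ultimately show ?thesis by simp
qed

theorem theorem6p1:
  shows "(\<forall>g\<in>motion_gens. leaves_invariant g standard_super_packing)
       \<and> {f. euclidean_motion f \<and> leaves_invariant f standard_super_packing} = motion_group"
proof
  show "\<forall>g\<in>motion_gens. leaves_invariant g standard_super_packing"
    using gens_inv unfolding motion_gens_def by auto
  show "{f. euclidean_motion f \<and> leaves_invariant f standard_super_packing} = motion_group"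
    using main_dir MG_sub by blast
qed

end
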